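(* Let $A\in\mathbb{Z}^{d\times n}$, $\mathbf{b}\in\mathbb{Z}^d$, $\mathbf{c}\in\mathbb{Z}^n$, $\mathbf{u}\in\mathbb{Z}_{\ge0}^n$. In any sequence of discrete steepest-descent augmentations $\mathbf{x}_{k+1}=\mathbf{x}_k+\alpha_k\mathbf{z}_k$ ($\mathbf{z}_k\in\mathcal{G}(A)$) for the ILP $\min\{\mathbf{c}^\top\mathbf{x} : A\mathbf{x}=\mathbf{b},\ \mathbf{0}\le\mathbf{x}\le\mathbf{u},\ \mathbf{x}\in\mathbb{Z}^n\}$, the directions $\mathbf{z}_k$ are pairwise distinct. Consequently the number of discrete steepest-descent augmentations needed to reach an optimal solution is at most $|\mathcal{G}(A)|$, independently of $\mathbf{b}$, $\mathbf{c}$, $\mathbf{u}$ and the initial feasible solution.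
   Context: For $\mathbf{v},\mathbf{w}\in\mathbb{R}^n$ write $\mathbf{v}\sqsubseteq\mathbf{w}$ if $v_iw_i\ge0$ and $|v_i|\le|w_i|$ for all $i$; the Graver basis $\mathcal{G}(A)$ is the set of $\sqsubseteq$-minimal elements of $(\ker(A)\cap\mathbb{Z}^n)\setminus\{\mathbf{0}\}$. Feasible means $A\mathbf{x}=\mathbf{b}$, $\mathbf{0}\le\mathbf{x}\le\mathbf{u}$, $\mathbf{x}\in\mathbb{Z}^n$. Discrete steepest-descent augmentation (ILP): given a feasible $\mathbf{x}_k$, choose $\mathbf{z}_k\in\mathcal{G}(A)$ maximizing $-\mathbf{c}^\top\mathbf{z}/\|\mathbf{z}\|_1$ among all $\mathbf{z}\in\mathcal{G}(A)$ with $\mathbf{x}_k+\mathbf{z}$ feasible; if this maximum is positive, let $\alpha_k$ be the largest integer with $\mathbf{x}_k+\alpha_k\mathbf{z}_k$ feasible and set $\mathbf{x}_{k+1}:=\mathbf{x}_k+\alpha_k\mathbf{z}_k$, otherwise stop. *)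

theory Defs
  imports "HOL-Analysis.Analysis"
begin

definition idot :: "int ^ 'n \<Rightarrow> int ^ 'n \<Rightarrow> int" where
  "idot c x = (\<Sum>i\<in>UNIV. c $ i * x $ i)"

definition norm1 :: "int ^ 'n \<Rightarrow> int" where
  "norm1 z = (\<Sum>i\<in>UNIV. \<bar>z $ i\<bar>)"

definition conf_le :: "int ^ 'n \<Rightarrow> int ^ 'n \<Rightarrow> bool" where
  "conf_le v w \<longleftrightarrow> (\<forall>i. v $ i * w $ i \<ge> 0 \<and> \<bar>v $ i\<bar> \<le> \<bar>w $ i\<bar>)"

definition graver :: "int ^ 'n ^ 'd \<Rightarrow> (int ^ 'n) set" where
  "graver A = {z. A *v z = 0 \<and> z \<noteq> 0 \<and>
       \<not> (\<exists>w. A *v w = 0 \<and> w \<noteq> 0 \<and> w \<noteq> z \<and> conf_le w z)}"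

definition feasible :: "int ^ 'n ^ 'd \<Rightarrow> int ^ 'd \<Rightarrow> int ^ 'n \<Rightarrow> int ^ 'n \<Rightarrow> bool" where
  "feasible A b u x \<longleftrightarrow> A *v x = b \<and> (\<forall>i. 0 \<le> x $ i \<and> x $ i \<le> u $ i)"

definition optimal :: "int ^ 'n ^ 'd \<Rightarrow> int ^ 'd \<Rightarrow> int ^ 'n \<Rightarrow> int ^ 'n \<Rightarrow> int ^ 'n \<Rightarrow> bool" where
  "optimal A b u c x \<longleftrightarrow> feasible A b u x \<and> (\<forall>y. feasible A b u y \<longrightarrow> idot c x \<le> idot c y)"

definition sd_ratio :: "int ^ 'n \<Rightarrow> int ^ 'n \<Rightarrow> real" where
  "sd_ratio c z = - real_of_int (idot c z) / real_of_int (norm1 z)"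

definition sd_step :: "int ^ 'n ^ 'd \<Rightarrow> int ^ 'd \<Rightarrow> int ^ 'n \<Rightarrow> int ^ 'n \<Rightarrow>
                        int ^ 'n \<Rightarrow> int ^ 'n \<Rightarrow> int \<Rightarrow> bool" where
  "sd_step A b u c x z \<alpha> \<longleftrightarrow>
     z \<in> graver A \<and> feasible A b u (x + z) \<and>
     (\<forall>z'\<in>graver A. feasible A b u (x + z') \<longrightarrow> sd_ratio c z' \<le> sd_ratio c z) \<and>
     sd_ratio c z > 0 \<and>
     feasible A b u (x + \<alpha> *s z) \<and>
     (\<forall>\<beta>::int. feasible A b u (x + \<beta> *s z) \<longrightarrow> \<beta> \<le> \<alpha>)"

definition sd_stops :: "int ^ 'n ^ 'd \<Rightarrow> int ^ 'd \<Rightarrow> int ^ 'n \<Rightarrow> int ^ 'n \<Rightarrow> int ^ 'n \<Rightarrow> bool" where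
  "sd_stops A b u c x \<longleftrightarrow> (\<forall>z\<in>graver A. feasible A b u (x + z) \<longrightarrow> sd_ratio c z \<le> 0)"

end

theory Submission
  imports Defs
begin


lemma mv_smult: "(A::int^'n^'d) *v (a *s z) = a *s (A *v z)"
  by (simp add: vec_eq_iff matrix_vector_mult_def sum_distrib_left algebra_simps)

lemma idot_add: "idot c (x + y) = idot c x + idot c y"
  by (simp add: idot_def sum.distrib distrib_left)
lemma idot_diff: "idot c (x - y) = idot c x - idot c y"
  by (simp add: idot_def sum_subtractf right_diff_distrib)
lemma idot_smult: "idot c (a *s z) = a * idot c z"
  by (simp add: idot_def sum_distrib_left algebra_simps)
lemma norm1_add_le: "norm1 (x + y) \<le> norm1 x + norm1 y"
  unfolding norm1_def by (simp add: sum.distrib[symmetric] sum_mono abs_triangle_ineq)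
lemma norm1_smult: "norm1 (a *s z) = \<bar>a\<bar> * norm1 z"
  by (simp add: norm1_def sum_distrib_left abs_mult)
lemma norm1_nonneg: "norm1 z \<ge> 0"
  by (simp add: norm1_def sum_nonneg)
lemma norm1_pos: assumes "z \<noteq> 0" shows "norm1 z > 0"
proof -
  from assms obtain i where i: "z $ i \<noteq> 0" by (auto simp: vec_eq_iff)
  have "\<bar>z $ i\<bar> \<le> norm1 z" unfolding norm1_def
    by (rule member_le_sum) auto
  with i show ?thesis by simp
qed

lemma antichain_finite:
  fixes S :: "('a \<Rightarrow> nat) set"
  assumes "finite I"
    and "\<forall>f\<in>S. \<forall>g\<in>S. (\<forall>i\<in>I. f i \<le> g i) \<longrightarrow> f = g"
  shows "finite S"
  using assms
proof (induction "card I" arbitrary: I S rule: less_induct)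
  case less
  show ?case
  proof (cases "S = {}")
    case True then show ?thesis by simp
  next
    case False
    then obtain s0 where s0: "s0 \<in> S" by auto
    have sub: "S \<subseteq> {s0} \<union> (\<Union>i\<in>I. \<Union>v\<in>{..<s0 i}. {f\<in>S. f i = v})"
    proof
      fix f assume f: "f \<in> S"
      show "f \<in> {s0} \<union> (\<Union>i\<in>I. \<Union>v\<in>{..<s0 i}. {f\<in>S. f i = v})"
      proof (cases "f = s0")
        case True then show ?thesis by simp
      next
        case False
        with less.prems(2) s0 f have "\<not> (\<forall>i\<in>I. s0 i \<le> f i)" by metis
        then obtain i where "i \<in> I" "f i < s0 i" by (auto simp: not_le)
        with f show ?thesis by auto
      qed
    qed
    have "finite {f\<in>S. f i = v}" if i: "i \<in> I" for i v
    proof -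
      have "card (I - {i}) < card I" using i less.prems(1)
        by (metis card_Diff1_less)
      moreover have "\<forall>f\<in>{f\<in>S. f i = v}. \<forall>g\<in>{f\<in>S. f i = v}.
          (\<forall>j\<in>I - {i}. f j \<le> g j) \<longrightarrow> f = g"
      proof (intro ballI impI)
        fix f g assume f: "f \<in> {f\<in>S. f i = v}" and g: "g \<in> {f\<in>S. f i = v}"
          and le: "\<forall>j\<in>I - {i}. f j \<le> g j"
        have "\<forall>j\<in>I. f j \<le> g j" using le f g by (metis (mono_tags, lifting) DiffI empty_iff insert_iff mem_Collect_eq order_refl)
        with less.prems(2) f g show "f = g" by auto
      qed
      ultimately show ?thesis using less.hyps[of "I - {i}"] less.prems(1) by auto
    qed
    then have "finite ({s0} \<union> (\<Union>i\<in>I. \<Union>v\<in>{..<s0 i}. {f\<in>S. f i = v}))"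
      using less.prems(1) by auto
    then show ?thesis using sub finite_subset by blast
  qed
qed




lemma graver_finite: "finite (graver (A::int^'n^'d))"
proof -
  let ?sig = "\<lambda>g::int^'n. {i. g $ i < 0}"
  let ?f = "\<lambda>g::int^'n. \<lambda>i. nat \<bar>g $ i\<bar>"
  have cls: "finite {g\<in>graver A. ?sig g = s}" for s
  proof -
    let ?G = "{g\<in>graver A. ?sig g = s}"
    have inj: "inj_on ?f ?G"
    proof (rule inj_onI)
      fix g h assume g: "g \<in> ?G" and h: "h \<in> ?G" and e: "?f g = ?f h"
      show "g = h"
      proof (subst vec_eq_iff, rule allI)
        fix i
        have "nat \<bar>g $ i\<bar> = nat \<bar>h $ i\<bar>" using e by meson
        then have a: "\<bar>g $ i\<bar> = \<bar>h $ i\<bar>" by simp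
        have "(g $ i < 0) = (h $ i < 0)" using g h by auto
        with a show "g $ i = h $ i" by (auto simp: abs_if split: if_splits)
      qed
    qed
    have "finite (?f ` ?G)"
    proof (rule antichain_finite[of UNIV], simp, intro ballI impI)
      fix F H assume F: "F \<in> ?f ` ?G" and H: "H \<in> ?f ` ?G" and le: "\<forall>i\<in>UNIV. F i \<le> H i"
      from F obtain g where g: "g \<in> ?G" "F = ?f g" by auto
      from H obtain h where h: "h \<in> ?G" "H = ?f h" by auto
      have cl: "conf_le g h" unfolding conf_le_def
      proof
        fix i
        have s: "(g $ i < 0) = (h $ i < 0)" using g h by auto
        have "nat \<bar>g $ i\<bar> \<le> nat \<bar>h $ i\<bar>" using le g h by auto
        then have "\<bar>g $ i\<bar> \<le> \<bar>h $ i\<bar>" by simp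
        with s show "0 \<le> g $ i * h $ i \<and> \<bar>g $ i\<bar> \<le> \<bar>h $ i\<bar>"
          by (auto simp: zero_le_mult_iff)
      qed
      have "g = h" using g(1) h(1) cl unfolding graver_def by auto
      then show "F = H" using g h by simp
    qed
    then show ?thesis using inj finite_imageD by blast
  qed
  have "graver A \<subseteq> (\<Union>s\<in>UNIV. {g\<in>graver A. ?sig g = s})" by auto
  moreover have "finite (\<Union>s\<in>(UNIV :: 'n set set). {g\<in>graver A. ?sig g = s})"
    using cls by simp
  ultimately show ?thesis using finite_subset by blast
qed

lemma conf_le_refl: "conf_le v v"
  by (simp add: conf_le_def)

lemma conf_le_trans: "conf_le a b \<Longrightarrow> conf_le b c \<Longrightarrow> conf_le a c"
  unfolding conf_le_def
  by (smt (verit, ccfv_threshold) mult_nonneg_nonpos zero_le_mult_iff)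

lemma conf_le_diff: "conf_le w v \<Longrightarrow> conf_le (v - w) v"
  unfolding conf_le_def
  by (smt (verit, best) mult_nonneg_nonpos vector_minus_component zero_le_mult_iff)

lemma conf_le_norm: "conf_le w v \<Longrightarrow> norm1 v = norm1 w + norm1 (v - w)"
  unfolding conf_le_def norm1_def sum.distrib[symmetric]
proof (rule sum.cong)
  fix i
  assume "\<forall>i. 0 \<le> w $ i * v $ i \<and> \<bar>w $ i\<bar> \<le> \<bar>v $ i\<bar>"
  then have "0 \<le> w $ i * v $ i" "\<bar>w $ i\<bar> \<le> \<bar>v $ i\<bar>" by auto
  then show "\<bar>v $ i\<bar> = \<bar>w $ i\<bar> + \<bar>(v - w) $ i\<bar>"
    by (simp add: zero_le_mult_iff) (smt (verit))
qed simp

lemma conf_le_norm_less: "conf_le w v \<Longrightarrow> w \<noteq> v \<Longrightarrow> norm1 w < norm1 v"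
  using conf_le_norm[of w v] norm1_pos[of "v - w"] by auto

lemma exists_graver:
  fixes A :: "int^'n^'d"
  shows "A *v v = 0 \<Longrightarrow> v \<noteq> 0 \<Longrightarrow> \<exists>g\<in>graver A. conf_le g v"
proof (induction "nat (norm1 v)" arbitrary: v rule: less_induct)
  case less
  show ?case
  proof (cases "v \<in> graver A")
    case True then show ?thesis using conf_le_refl by blast
  next
    case False
    then obtain w where w: "A *v w = 0" "w \<noteq> 0" "w \<noteq> v" "conf_le w v"
      using less.prems unfolding graver_def by blast
    have "nat (norm1 w) < nat (norm1 v)" using conf_le_norm_less[OF w(4) w(3)] norm1_nonneg[of w] by simp
    with less.hyps w obtain g where "g \<in> graver A" "conf_le g w" by blast
    then show ?thesis using conf_le_trans w(4) by blast
  qed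
qed

lemma feasible_kernel:
  "feasible A b u x \<Longrightarrow> feasible A b u (x + v) \<Longrightarrow> A *v v = 0"
  unfolding feasible_def by (simp add: matrix_vector_right_distrib)

lemma feasible_conf:
  assumes "feasible A b u x" "feasible A b u (x + v)" "conf_le w v" "A *v w = 0"
  shows "feasible A b u (x + w)"
  using assms unfolding feasible_def conf_le_def
  apply (simp add: matrix_vector_right_distrib)
  by (smt (verit) zero_le_mult_iff)

lemma key:
  fixes A :: "int^'n^'d"
  assumes fx: "feasible A b u x"
    and H: "\<forall>g\<in>graver A. feasible A b u (x + g) \<longrightarrow> - real_of_int (idot c g) \<le> R * real_of_int (norm1 g)"
  shows "feasible A b u (x + v) \<Longrightarrow> - real_of_int (idot c v) \<le> R * real_of_int (norm1 v)"
proof (induction "nat (norm1 v)" arbitrary: v rule: less_induct)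
  case less
  show ?case
  proof (cases "v = 0")
    case True then show ?thesis by (simp add: idot_def norm1_def)
  next
    case False
    have kv: "A *v v = 0" using feasible_kernel[OF fx less.prems] .
    obtain g where g: "g \<in> graver A" "conf_le g v" using exists_graver[OF kv False] by blast
    have kg: "A *v g = 0" using g(1) unfolding graver_def by simp
    have g0: "g \<noteq> 0" using g(1) unfolding graver_def by simp
    have fg: "feasible A b u (x + g)" using feasible_conf[OF fx less.prems g(2) kg] .
    have c1: "conf_le (v - g) v" using conf_le_diff[OF g(2)] .
    have k2: "A *v (v - g) = 0" using kv kg by (simp add: matrix_vector_mult_diff_distrib)
    have f2: "feasible A b u (x + (v - g))" using feasible_conf[OF fx less.prems c1 k2] .
    have nrm: "norm1 v = norm1 g + norm1 (v - g)" using conf_le_norm[OF g(2)] .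
    have "nat (norm1 (v - g)) < nat (norm1 v)" using nrm norm1_pos[OF g0] norm1_nonneg[of "v-g"] by simp
    then have ih: "- real_of_int (idot c (v - g)) \<le> R * real_of_int (norm1 (v - g))"
      using less.hyps f2 by blast
    have hg: "- real_of_int (idot c g) \<le> R * real_of_int (norm1 g)" using H g(1) fg by blast
    have "idot c v = idot c g + idot c (v - g)" using idot_add[of c g "v - g"] by simp
    then show ?thesis using ih hg nrm by (simp add: algebra_simps)
  qed
qed


lemma ratio_eq:
  assumes "z \<noteq> 0"
  shows "- real_of_int (idot c z) = sd_ratio c z * real_of_int (norm1 z)"
  using norm1_pos[OF assms] unfolding sd_ratio_def by simp

lemma ratio_le:
  assumes "z \<noteq> 0" "sd_ratio c z \<le> R"
  shows "- real_of_int (idot c z) \<le> R * real_of_int (norm1 z)"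
  using ratio_eq[OF assms(1), of c] norm1_pos[OF assms(1)] assms(2)
  by (simp add: mult_right_mono)

lemma ratio_le_rev:
  assumes "z \<noteq> 0" "- real_of_int (idot c z) \<le> R * real_of_int (norm1 z)"
  shows "sd_ratio c z \<le> R"
  using ratio_eq[OF assms(1), of c] norm1_pos[OF assms(1)] assms(2)
  by (simp add: mult_le_cancel_right)

theorem corollary7:
  fixes A :: "int ^ 'n ^ 'd" and b :: "int ^ 'd" and c u :: "int ^ 'n"
    and x z :: "nat \<Rightarrow> int ^ 'n" and \<alpha> :: "nat \<Rightarrow> int" and N :: nat
  assumes u_nonneg: "\<forall>i. 0 \<le> u $ i"
    and x0: "feasible A b u (x 0)"
    and steps: "\<forall>k<N. sd_step A b u c (x k) (z k) (\<alpha> k) \<and> x (Suc k) = x k + \<alpha> k *s z k"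
  shows "(\<forall>i<N. \<forall>j<N. i \<noteq> j \<longrightarrow> z i \<noteq> z j)
       \<and> N \<le> card (graver A)
       \<and> (sd_stops A b u c (x N) \<longrightarrow> optimal A b u c (x N))"
proof -
  define r where "r k = sd_ratio c (z k)" for k
  have st: "sd_step A b u c (x k) (z k) (\<alpha> k)" and xs: "x (Suc k) = x k + \<alpha> k *s z k"
    if "k < N" for k using steps that by auto
  have zg: "z k \<in> graver A" if "k < N" for k using st[OF that] unfolding sd_step_def by simp
  have z0: "z k \<noteq> 0" if "k < N" for k using zg[OF that] unfolding graver_def by simp
  have zk: "A *v z k = 0" if "k < N" for k using zg[OF that] unfolding graver_def by simp
  have rpos: "r k > 0" if "k < N" for k using st[OF that] unfolding sd_step_def r_def by simp
  have a1: "\<alpha> k \<ge> 1" if "k < N" for k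
  proof -
    have "feasible A b u (x k + 1 *s z k)" using st[OF that] unfolding sd_step_def by simp
    then show ?thesis using st[OF that] unfolding sd_step_def by blast
  qed
  have amax: "\<beta> \<le> \<alpha> k" if "k < N" "feasible A b u (x k + \<beta> *s z k)" for k \<beta>
    using st[OF that(1)] that(2) unfolding sd_step_def by blast
  have feas: "feasible A b u (x k)" if "k \<le> N" for k
    using that
  proof (induction k)
    case 0 then show ?case using x0 by simp
  next
    case (Suc k)
    then have "k < N" by simp
    then show ?case using st[of k] xs[of k] unfolding sd_step_def by simp
  qed
  have fz: "feasible A b u (x k + z k)" if "k < N" for k
    using st[OF that] unfolding sd_step_def by simp
  have hyp: "\<forall>g\<in>graver A. feasible A b u (x k + g) \<longrightarrow>
      - real_of_int (idot c g) \<le> r k * real_of_int (norm1 g)" if "k < N" for k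
  proof (intro ballI impI)
    fix g assume g: "g \<in> graver A" "feasible A b u (x k + g)"
    then have "sd_ratio c g \<le> r k" using st[OF that] unfolding sd_step_def r_def by blast
    moreover have "g \<noteq> 0" using g unfolding graver_def by simp
    ultimately show "- real_of_int (idot c g) \<le> r k * real_of_int (norm1 g)"
      using ratio_le by blast
  qed
  have rz: "- real_of_int (idot c (z k)) = r k * real_of_int (norm1 (z k))" if "k < N" for k
    using ratio_eq[OF z0[OF that]] r_def by simp
  have mono: "r (Suc k) \<le> r k" if "Suc k < N" for k
  proof -
    have k: "k < N" using that by simp
    let ?g = "z (Suc k)"
    let ?v = "\<alpha> k *s z k + ?g"
    have "x k + ?v = x (Suc k) + ?g" using xs[OF k] by (simp add: add.assoc)
    then have fv: "feasible A b u (x k + ?v)" using fz[OF that] by metis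
    have K: "- real_of_int (idot c ?v) \<le> r k * real_of_int (norm1 ?v)"
      using key[OF feas[of k] hyp[OF k] fv] k by simp
    have n: "norm1 ?v \<le> \<alpha> k * norm1 (z k) + norm1 ?g"
      using norm1_add_le[of "\<alpha> k *s z k" ?g] norm1_smult[of "\<alpha> k" "z k"] a1[OF k] by simp
    have "real_of_int (norm1 ?v) \<le> real_of_int (\<alpha> k) * real_of_int (norm1 (z k)) + real_of_int (norm1 ?g)"
      using n by (metis of_int_add of_int_le_iff of_int_mult)
    then have K2: "- real_of_int (idot c ?v) \<le> r k * (real_of_int (\<alpha> k) * real_of_int (norm1 (z k)) + real_of_int (norm1 ?g))"
      using K rpos[OF k] by (smt (verit) mult_left_mono)
    have "- real_of_int (idot c ?v) = real_of_int (\<alpha> k) * (r k * real_of_int (norm1 (z k))) - real_of_int (idot c ?g)"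
      using rz[OF k] by (simp add: idot_add idot_smult algebra_simps) (metis mult.left_commute mult_minus_right)
    with K2 have "- real_of_int (idot c ?g) \<le> r k * real_of_int (norm1 ?g)"
      by (simp add: algebra_simps)
    then show ?thesis unfolding r_def using ratio_le_rev z0[OF that] by blast
  qed
  have chain: "r j \<le> r k" if "k \<le> j" "j < N" for j k
    using that
  proof (induction j)
    case 0 then show ?case by simp
  next
    case (Suc j)
    show ?case
    proof (cases "k = Suc j")
      case True then show ?thesis by simp
    next
      case False
      then have "k \<le> j" using Suc.prems by simp
      then show ?thesis using Suc mono[of j] by simp
    qed
  qed
  have dist: "z i \<noteq> z j" if ij: "i < j" "j < N" for i j
  proof
    assume eq: "z i = z j"
    have iN: "i < N" using ij by simp
    define \<rho> where "\<rho> = r i"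
    have req: "r k = \<rho>" if "i \<le> k" "k \<le> j" for k
      using chain[of i k] chain[of k j] that ij eq unfolding \<rho>_def r_def by fastforce
    have W: "\<exists>T. - real_of_int (idot c (x m - x (Suc i))) = \<rho> * T \<and>
               real_of_int (norm1 (x m - x (Suc i))) \<le> T" if "Suc i \<le> m" "m \<le> j" for m
      using that
    proof (induction m rule: dec_induct)
      case base then show ?case by (intro exI[of _ 0]) (simp add: idot_def norm1_def)
    next
      case (step m)
      then obtain T where T: "- real_of_int (idot c (x m - x (Suc i))) = \<rho> * T"
          "real_of_int (norm1 (x m - x (Suc i))) \<le> T" by auto
      have mN: "m < N" using step ij by simp
      have rm: "r m = \<rho>" using req step by simp
      have e: "x (Suc m) - x (Suc i) = (x m - x (Suc i)) + \<alpha> m *s z m"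
        using xs[OF mN] by (simp add: algebra_simps)
      have nn: "norm1 (x (Suc m) - x (Suc i)) \<le> norm1 (x m - x (Suc i)) + \<alpha> m * norm1 (z m)"
        unfolding e using norm1_add_le[of "x m - x (Suc i)" "\<alpha> m *s z m"] norm1_smult[of "\<alpha> m" "z m"] a1[OF mN] by simp
      show ?case
      proof (intro exI[of _ "T + real_of_int (\<alpha> m) * real_of_int (norm1 (z m))"] conjI)
        show "- real_of_int (idot c (x (Suc m) - x (Suc i))) = \<rho> * (T + real_of_int (\<alpha> m) * real_of_int (norm1 (z m)))"
        proof -
          have i1: "idot c (x (Suc m) - x (Suc i)) = idot c (x m - x (Suc i)) + \<alpha> m * idot c (z m)"
            unfolding e by (simp add: idot_add idot_smult)
          have h: "real_of_int (\<alpha> m) * (- real_of_int (idot c (z m))) = real_of_int (\<alpha> m) * (\<rho> * real_of_int (norm1 (z m)))"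
            using rz[OF mN] rm by simp
          show ?thesis using i1 h T(1) by (simp add: algebra_simps)
        qed
        have "real_of_int (norm1 (x (Suc m) - x (Suc i))) \<le> real_of_int (norm1 (x m - x (Suc i))) + real_of_int (\<alpha> m) * real_of_int (norm1 (z m))"
          using nn by (metis of_int_add of_int_le_iff of_int_mult)
        then show "real_of_int (norm1 (x (Suc m) - x (Suc i))) \<le> T + real_of_int (\<alpha> m) * real_of_int (norm1 (z m))"
          using T(2) by simp
      qed
    qed
    obtain T where T: "- real_of_int (idot c (x j - x (Suc i))) = \<rho> * T"
        "real_of_int (norm1 (x j - x (Suc i))) \<le> T" using W[of j] ij by auto
    define Wv where "Wv = x j - x (Suc i)"
    define P where "P = (\<alpha> i + 1) *s z i"
    define D where "D = P + Wv"
    have xD: "x i + D = x j + z j"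
      unfolding D_def P_def Wv_def using xs[OF iN] eq by (simp add: algebra_simps vector_sadd_rdistrib)
    have fD: "feasible A b u (x i + D)" using xD fz[OF ij(2)] by simp
    have K: "- real_of_int (idot c D) \<le> \<rho> * real_of_int (norm1 D)"
      using key[OF feas[of i] hyp[OF iN] fD] iN unfolding \<rho>_def by simp
    have nP: "norm1 P = (\<alpha> i + 1) * norm1 (z i)"
      unfolding P_def norm1_smult using a1[OF iN] by simp
    have cD: "- real_of_int (idot c D) = \<rho> * (real_of_int (norm1 P) + T)"
    proof -
      have i1: "idot c D = (\<alpha> i + 1) * idot c (z i) + idot c Wv"
        unfolding D_def P_def by (simp add: idot_add idot_smult algebra_simps)
      have h: "real_of_int (\<alpha> i + 1) * (- real_of_int (idot c (z i))) = real_of_int (\<alpha> i + 1) * (\<rho> * real_of_int (norm1 (z i)))"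
        using rz[OF iN] unfolding \<rho>_def by simp
      have n2: "real_of_int (norm1 P) = real_of_int (\<alpha> i + 1) * real_of_int (norm1 (z i))"
        using nP by simp
      have t1: "- real_of_int (idot c Wv) = \<rho> * T" using T(1) unfolding Wv_def .
      show ?thesis unfolding i1 n2 using h t1 by (simp add: algebra_simps)
    qed
    have "real_of_int (norm1 P) + T \<le> real_of_int (norm1 D)"
      using K cD rpos[OF iN] unfolding \<rho>_def by (simp add: mult_le_cancel_left)
    moreover have "norm1 D \<le> norm1 P + norm1 Wv" unfolding D_def by (rule norm1_add_le)
    ultimately have nD: "norm1 D = norm1 P + norm1 Wv" using T(2) unfolding Wv_def[symmetric]
      by linarith
    have coord: "\<bar>D $ l\<bar> = \<bar>P $ l\<bar> + \<bar>Wv $ l\<bar>" for l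
    proof (rule sum_mono_inv[where f="\<lambda>l. \<bar>D $ l\<bar>" and g="\<lambda>l. \<bar>P $ l\<bar> + \<bar>Wv $ l\<bar>" and I=UNIV])
      show "(\<Sum>l\<in>UNIV. \<bar>D $ l\<bar>) = (\<Sum>l\<in>UNIV. \<bar>P $ l\<bar> + \<bar>Wv $ l\<bar>)"
        using nD unfolding norm1_def by (simp add: sum.distrib)
      show "\<And>l. l \<in> UNIV \<Longrightarrow> \<bar>D $ l\<bar> \<le> \<bar>P $ l\<bar> + \<bar>Wv $ l\<bar>"
        unfolding D_def by (simp add: abs_triangle_ineq)
    qed auto
    have fP: "feasible A b u (x i + P)"
    proof -
      have kP: "A *v P = 0" unfolding P_def mv_smult using zk[OF iN] by simp
      have "conf_le P D" unfolding conf_le_def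
      proof
        fix l
        have "\<bar>P $ l + Wv $ l\<bar> = \<bar>P $ l\<bar> + \<bar>Wv $ l\<bar>" using coord[of l] unfolding D_def by simp
        then show "0 \<le> P $ l * D $ l \<and> \<bar>P $ l\<bar> \<le> \<bar>D $ l\<bar>"
          unfolding D_def by (simp add: zero_le_mult_iff) (smt (verit))
      qed
      then show ?thesis using feasible_conf[OF feas[of i] fD _ kP] iN by simp
    qed
    have "\<alpha> i + 1 \<le> \<alpha> i" using amax[OF iN] fP unfolding P_def by blast
    then show False by simp
  qed
  have D1: "\<forall>i<N. \<forall>j<N. i \<noteq> j \<longrightarrow> z i \<noteq> z j"
    using dist by (metis linorder_neqE_nat)
  have D2: "N \<le> card (graver A)"
  proof -
    have "inj_on z {..<N}" using D1 by (auto simp: inj_on_def)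
    moreover have "z ` {..<N} \<subseteq> graver A" using zg by auto
    ultimately have "card {..<N} \<le> card (graver A)"
      using card_inj_on_le graver_finite by blast
    then show ?thesis by simp
  qed
  have D3: "optimal A b u c (x N)" if s: "sd_stops A b u c (x N)"
  proof -
    have fN: "feasible A b u (x N)" using feas by simp
    have H0: "\<forall>g\<in>graver A. feasible A b u (x N + g) \<longrightarrow> - real_of_int (idot c g) \<le> 0 * real_of_int (norm1 g)"
    proof (intro ballI impI)
      fix g assume g: "g \<in> graver A" "feasible A b u (x N + g)"
      then have "sd_ratio c g \<le> 0" using s unfolding sd_stops_def by blast
      moreover have "g \<noteq> 0" using g unfolding graver_def by simp
      ultimately show "- real_of_int (idot c g) \<le> 0 * real_of_int (norm1 g)"
        using ratio_le by blast
    qed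
    have "idot c (x N) \<le> idot c y" if fy: "feasible A b u y" for y
    proof -
      have "feasible A b u (x N + (y - x N))" using fy by simp
      from key[OF fN H0 this] have "- idot c (y - x N) \<le> 0" by simp
      then show ?thesis by (simp add: idot_diff)
    qed
    then show ?thesis using fN unfolding optimal_def by blast
  qed
  show ?thesis using D1 D2 D3 by blast
qed

end
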